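(* Let $p$ be an odd prime and $G$ a finite non-abelian $2$-generated $p$-group with cyclic $G'$, with parameters $m,o_1,o_2,r_1,r_2$ as in the context. Let $\delta_1,\delta_2$ be the unique integers with $1\le\delta_1\le p^{o_1}$, $1\le\delta_2\le p^{o_2}$ such that $\mathcal{S}_{r_2}(\delta_1p^{m-o_1})\equiv 1-r_1\bmod p^m$ and $\mathcal{S}_{r_1}(\delta_2p^{m-o_2})\,r_2^{\delta_1p^{m-o_1}}\equiv r_2-1\bmod p^m$. Then $\delta_1=\delta_2=1$ if $o_1=0$, and $\delta_1+\delta_2\equiv 0\bmod p^{o_2}$ otherwise.
   Context: $\mathcal{S}_s(n)=\sum_{i=0}^{n-1}s^i$. Let $|G'|=p^m$, $G/G'\cong C_{p^{n_1}}\times C_{p^{n_2}}$, $n_1\ge n_2\ge1$. A basis is a pair $(b_1,b_2)$ with $G/G'=\langle b_1G'\rangle\times\langle b_2G'\rangle$ and $|b_iG'|=p^{n_i}$. For $g\in G$, $p^{o(g)}=|g{\rm C}_G(G')|$. $(o_1,o_2)=\min_{\mathrm{lex}}\{(o(b_1),o(b_2)):(b_1,b_2)\text{ a basis}\}$; $r_1=1+p^{m-o_1}$; $r_2=1+p^{m-o_2}$ if $o_2>o_1$, else $r_2=r_1^{p^{o_1-o_2}}$. *)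

theory Defs
  imports "HOL-Algebra.Algebra" "HOL-Number_Theory.Cong"
begin

abbreviation comm_sub :: "('a, 'b) monoid_scheme \<Rightarrow> 'a set" where
  "comm_sub G \<equiv> derived G (carrier G)"

definition centralizer :: "('a, 'b) monoid_scheme \<Rightarrow> 'a set \<Rightarrow> 'a set" where
  "centralizer G H = {g \<in> carrier G. \<forall>h\<in>H. g \<otimes>\<^bsub>G\<^esub> h = h \<otimes>\<^bsub>G\<^esub> g}"

definition S_sum :: "int \<Rightarrow> nat \<Rightarrow> int" where
  "S_sum s n = (\<Sum>i<n. s ^ i)"

definition is_basis :: "('a, 'b) monoid_scheme \<Rightarrow> nat \<Rightarrow> nat \<Rightarrow> nat \<Rightarrow> 'a \<Rightarrow> 'a \<Rightarrow> bool" where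
  "is_basis G p n1 n2 b1 b2 \<longleftrightarrow>
     (let Q = G Mod (comm_sub G); x = comm_sub G #>\<^bsub>G\<^esub> b1; y = comm_sub G #>\<^bsub>G\<^esub> b2 in
      b1 \<in> carrier G \<and> b2 \<in> carrier G \<and>
      generate Q {x, y} = carrier Q \<and>
      generate Q {x} \<inter> generate Q {y} = {\<one>\<^bsub>Q\<^esub>} \<and>
      group.ord Q x = p ^ n1 \<and> group.ord Q y = p ^ n2)"

definition o_exp :: "('a, 'b) monoid_scheme \<Rightarrow> nat \<Rightarrow> 'a \<Rightarrow> nat" where
  "o_exp G p g = (THE k. p ^ k =
      group.ord (G Mod (centralizer G (comm_sub G))) (centralizer G (comm_sub G) #>\<^bsub>G\<^esub> g))"

end

theory Submission
  imports Defs "HOL-Number_Theory.Residues"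
begin


lemma S_Suc: "S_sum z (Suc n) = S_sum z n + z ^ n"
  unfolding S_sum_def by simp

lemma S_0 [simp]: "S_sum z 0 = 0"
  unfolding S_sum_def by simp

lemma S_geom: "(z - 1) * S_sum z n = z ^ n - 1"
  unfolding S_sum_def using power_diff_1_eq[of z n] by simp

lemma S_add: "S_sum z (a + b) = S_sum z a + z ^ a * S_sum z b"
  by (induction b) (simp_all add: S_Suc algebra_simps power_add)

lemma S_mult: "S_sum z (a * b) = S_sum z a * S_sum (z ^ a) b"
proof (induction b)
  case 0 then show ?case by (simp add: S_sum_def)
next
  case (Suc b)
  have "S_sum z (a * Suc b) = S_sum z (a * b + a)" by (simp add: algebra_simps)
  also have "\<dots> = S_sum z (a*b) + z^(a*b) * S_sum z a" by (rule S_add)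
  also have "\<dots> = S_sum z a * S_sum (z ^ a) (Suc b)"
    using Suc by (simp add: S_Suc algebra_simps power_mult)
  finally show ?case .
qed

lemma S_cong_n:
  assumes "[z = 1] (mod P)" shows "[S_sum z n = int n] (mod P)"
proof (induction n)
  case 0 then show ?case by (simp add: S_sum_def)
next
  case (Suc n)
  have "[z ^ n = 1 ^ n] (mod P)" using assms by (rule cong_pow)
  then have "[S_sum z n + z ^ n = int n + 1] (mod P)" using Suc by (intro cong_add) auto
  then show ?case by (simp add: S_Suc add.commute)
qed

lemma S_p_aux:
  fixes z t P :: int
  assumes "z = 1 + t * P"
  shows "[z ^ n = 1 + int n * t * P] (mod P^2) \<and> [2 * S_sum z n = 2 * int n + t * P * int n * (int n - 1)] (mod P^2)"
proof (induction n)
  case 0 then show ?case by (simp add: S_sum_def)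
next
  case (Suc n)
  then have h1: "[z ^ n = 1 + int n * t * P] (mod P^2)" and h2: "[2 * S_sum z n = 2 * int n + t * P * int n * (int n - 1)] (mod P^2)" by auto
  have "[z ^ Suc n = (1 + int n * t * P) * z] (mod P^2)" using cong_mult[OF h1 cong_refl[of z]] by (simp add: mult.commute)
  moreover have "(1 + int n * t * P) * z = 1 + int (Suc n) * t * P + (int n * t * t) * P^2"
    using assms by (simp add: algebra_simps power2_eq_square)
  moreover have "[1 + int (Suc n) * t * P + (int n * t * t) * P^2 = 1 + int (Suc n) * t * P] (mod P^2)"
    by (simp add: cong_iff_dvd_diff)
  ultimately have c1: "[z ^ Suc n = 1 + int (Suc n) * t * P] (mod P^2)" by (metis cong_trans)
  have "[2 * S_sum z n + 2 * z^n = 2 * int n + t * P * int n * (int n - 1) + 2 * (1 + int n * t * P)] (mod P^2)"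
    using h1 h2 by (intro cong_add cong_mult) auto
  moreover have "2 * int n + t * P * int n * (int n - 1) + 2 * (1 + int n * t * P) = 2 * int (Suc n) + t * P * int (Suc n) * (int (Suc n) - 1)"
    by (simp add: algebra_simps)
  ultimately have c2: "[2 * S_sum z (Suc n) = 2 * int (Suc n) + t * P * int (Suc n) * (int (Suc n) - 1)] (mod P^2)"
    by (simp add: S_Suc algebra_simps)
  show ?case using c1 c2 by blast
qed

lemma S_p:
  fixes p :: nat and z :: int
  assumes p: "Factorial_Ring.prime p" "odd p" and z: "[z = 1] (mod int p)"
  shows "\<exists>u. S_sum z p = int p * u \<and> \<not> int p dvd u"
proof -
  define P where "P = int p"
  obtain t where t: "z = 1 + t * P"
    using z unfolding P_def cong_iff_dvd_diff by (metis dvd_def add.commute diff_add_cancel mult.commute)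
  obtain h where h: "int p - 1 = 2 * h" using p by (metis odd_two_times_div_two_succ add_diff_cancel_right' of_nat_add of_nat_mult of_nat_numeral of_nat_1)
  have "[2 * S_sum z p = 2 * int p + t * P * int p * (int p - 1)] (mod P^2)"
    using S_p_aux[OF t] by blast
  moreover have "2 * int p + t * P * int p * (int p - 1) = 2 * P + (2 * t * h) * P^2"
    using h unfolding P_def by (simp add: algebra_simps power2_eq_square)
  moreover have "[2 * P + (2 * t * h) * P^2 = 2 * P] (mod P^2)" by (simp add: cong_iff_dvd_diff)
  ultimately have "[2 * S_sum z p = 2 * P] (mod P^2)" by (metis cong_trans)
  moreover have "coprime 2 (P^2)" using p unfolding P_def by simp
  ultimately have c: "[S_sum z p = P] (mod P^2)" by (metis cong_mult_lcancel)
  have pP: "P > 1" using p prime_gt_1_nat unfolding P_def by simp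
  have "P dvd S_sum z p" using cong_dvd_modulus[OF c, of P] c
    by (metis cong_dvd_iff dvd_refl power2_eq_square dvd_triv_left)
  then obtain u where u: "S_sum z p = P * u" by blast
  have "\<not> P dvd u"
  proof
    assume "P dvd u"
    then have "P^2 dvd S_sum z p" using u by (simp add: power2_eq_square)
    then have "P^2 dvd P" using c by (metis cong_dvd_iff)
    then have "P * P dvd P * 1" by (simp add: power2_eq_square)
    then have "P dvd 1" using pP by (subst (asm) dvd_mult_cancel_left) auto
    then show False using pP by (simp add: zdvd1_eq)
  qed
  then show ?thesis using u unfolding P_def by blast
qed

lemma S_val:
  fixes p :: nat and z :: int
  assumes p: "Factorial_Ring.prime p" "odd p" and z: "[z = 1] (mod int p)"
  shows "int p ^ j dvd S_sum z n \<longleftrightarrow> p ^ j dvd n"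
using z proof (induction j arbitrary: z n)
  case 0 then show ?case by simp
next
  case (Suc j)
  define P where "P = int p"
  have pP: "P > 1" using p prime_gt_1_nat unfolding P_def by simp
  have primeP: "Factorial_Ring.prime P" using p unfolding P_def by simp
  have zp: "[z ^ p = 1] (mod int p)" using cong_pow[OF Suc.prems, of p] by simp
  obtain u where u: "S_sum z p = P * u" "\<not> P dvd u" using S_p[OF p Suc.prems] P_def by auto
  have cop: "coprime (P ^ j) u" using u(2) primeP
    by (simp add: prime_imp_coprime)
  show ?case
  proof
    assume a: "int p ^ Suc j dvd S_sum z n"
    then have "P dvd S_sum z n" unfolding P_def by (metis dvd_mult_left power_Suc)
    moreover have "[S_sum z n = int n] (mod P)" using S_cong_n Suc.prems P_def by blast
    ultimately have "P dvd int n" by (metis cong_dvd_iff)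
    then have "p dvd n" by (simp add: P_def)
    then obtain k where k: "n = p * k" by blast
    have "S_sum z n = P * u * S_sum (z^p) k" using S_mult k u by simp
    then have "P * P^j dvd P * (u * S_sum (z^p) k)" using a by (simp add: P_def mult.assoc)
    then have "P^j dvd u * S_sum (z^p) k" using pP by simp
    then have "P^j dvd S_sum (z^p) k" using cop by (simp add: coprime_dvd_mult_right_iff)
    then have "p^j dvd k" using Suc.IH[OF zp] P_def by simp
    then show "p ^ Suc j dvd n" using k by simp
  next
    assume "p ^ Suc j dvd n"
    then obtain l where l: "n = p * (p^j * l)" by (auto simp: dvd_def mult.assoc)
    define k where "k = p^j * l"
    have "p^j dvd k" unfolding k_def by simp
    then have "P^j dvd S_sum (z^p) k" using Suc.IH[OF zp] P_def by simp
    moreover have "S_sum z n = P * u * S_sum (z^p) k" using S_mult l u k_def by simp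
    ultimately show "int p ^ Suc j dvd S_sum z n" unfolding P_def by (simp add: mult_dvd_mono)
  qed
qed

lemma final_nt:
  fixes p m o1 o2 \<delta>1 \<delta>2 :: nat and r1 r2 :: int
  assumes p: "Factorial_Ring.prime p" "odd p"
    and hA1: "o1 \<le> m - 1" and hA2: "o2 \<le> m - 1" and hB: "o1 \<noteq> 0 \<Longrightarrow> o2 \<le> o1"
    and r1: "r1 = 1 + int p ^ (m - o1)"
    and r2: "r2 = (if o2 > o1 then 1 + int p ^ (m - o2) else r1 ^ (p ^ (o1 - o2)))"
    and d: "1 \<le> \<delta>1" "\<delta>1 \<le> p ^ o1" "1 \<le> \<delta>2" "\<delta>2 \<le> p ^ o2"
    and c1: "[S_sum r2 (\<delta>1 * p ^ (m - o1)) = 1 - r1] (mod int p ^ m)"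
    and c2: "[S_sum r1 (\<delta>2 * p ^ (m - o2)) * r2 ^ (\<delta>1 * p ^ (m - o1)) = r2 - 1] (mod int p ^ m)"
  shows "(o1 = 0 \<longrightarrow> \<delta>1 = 1 \<and> \<delta>2 = 1) \<and> (o1 \<noteq> 0 \<longrightarrow> [\<delta>1 + \<delta>2 = 0] (mod p ^ o2))"
proof -
  define P where "P = int p"
  have pP: "P > 1" using p prime_gt_1_nat unfolding P_def by simp
  have p1: "p > 1" using p prime_gt_1_nat by simp
  show ?thesis
  proof (cases "o1 = 0")
    case True
    then have d1: "\<delta>1 = 1" using d by simp
    have "\<delta>2 = 1"
    proof (cases "o2 = 0")
      case True then show ?thesis using d by simp
    next
      case False
      then have mo2: "m - o2 \<ge> 1" "o2 < m" using hA2 by auto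
      have r2e: "r2 = 1 + P ^ (m - o2)" using r2 False \<open>o1 = 0\<close> P_def by simp
      have r1e: "r1 = 1 + P ^ m" using r1 \<open>o1 = 0\<close> P_def by simp
      have "[r1 = 1] (mod P ^ m)" using r1e by (simp add: cong_iff_dvd_diff)
      then have s1: "[S_sum r1 (\<delta>2 * p ^ (m - o2)) = int (\<delta>2 * p ^ (m - o2))] (mod P ^ m)"
        by (rule S_cong_n)
      have r2p: "[r2 = 1] (mod int p)" using r2e mo2 unfolding P_def cong_iff_dvd_diff
        by (simp add: dvd_power)
      have "int p ^ m dvd S_sum r2 (p ^ m)" using S_val[OF p r2p] by simp
      then have "P ^ m dvd (r2 - 1) * S_sum r2 (p ^ m)" unfolding P_def by simp
      then have "P ^ m dvd r2 ^ (p ^ m) - 1" by (simp add: S_geom)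
      then have s2: "[r2 ^ (p ^ m) = 1] (mod P ^ m)" by (simp add: cong_iff_dvd_diff)
      have "[S_sum r1 (\<delta>2 * p ^ (m - o2)) * r2 ^ (\<delta>1 * p ^ (m - o1)) = int (\<delta>2 * p ^ (m - o2)) * 1] (mod P ^ m)"
        using cong_mult[OF s1 s2] d1 \<open>o1 = 0\<close> by simp
      then have "[int (\<delta>2 * p ^ (m - o2)) = P ^ (m - o2)] (mod P ^ m)"
        using c2 r2e unfolding P_def by (metis cong_sym cong_trans mult_1_right add_diff_cancel_left')
      then have "P ^ m dvd int \<delta>2 * P ^ (m - o2) - P ^ (m - o2)"
        unfolding P_def cong_iff_dvd_diff by simp
      moreover have "P ^ m = P ^ o2 * P ^ (m - o2)" using mo2 by (simp flip: power_add)
      moreover have "int \<delta>2 * P ^ (m - o2) - P ^ (m - o2) = (int \<delta>2 - 1) * P ^ (m - o2)"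
        by (simp add: algebra_simps)
      ultimately have "P ^ o2 dvd int \<delta>2 - 1" using pP by simp
      moreover have hh: "int \<delta>2 \<le> int p ^ o2" using d by (metis of_nat_le_iff of_nat_power)
      have "0 \<le> int \<delta>2 - 1" "int \<delta>2 - 1 < P ^ o2" using d hh unfolding P_def by linarith+
      ultimately have "int \<delta>2 - 1 = 0" by (metis zdvd_imp_le not_le order.not_eq_order_implies_strict)
      then show ?thesis by simp
    qed
    then show ?thesis using d1 True by simp
  next
    case False
    then have o21: "o2 \<le> o1" and o1m: "o1 < m" using hB hA1 by auto
    define r where "r = r1"
    define q where "q = p ^ (o1 - o2)"
    define N1 where "N1 = \<delta>1 * p ^ (m - o1)"
    define N2 where "N2 = \<delta>2 * p ^ (m - o2)"
    have re: "r = 1 + P ^ (m - o1)" using r1 r_def P_def by simp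
    have r2e: "r2 = r ^ q" using r2 o21 r_def q_def by simp
    have rp: "[r = 1] (mod int p)" using re o1m unfolding P_def cong_iff_dvd_diff
      by (simp add: dvd_power)
    have e1: "S_sum r (q * N1) = S_sum r q * S_sum r2 N1" using S_mult r2e by simp
    have "[S_sum r q * S_sum r2 N1 = S_sum r q * (1 - r)] (mod P ^ m)"
      using c1 unfolding N1_def P_def r_def by (simp add: cong_scalar_left)
    moreover have "S_sum r q * (1 - r) = - (r2 - 1)"
      using S_geom[of r q] r2e by (simp add: algebra_simps)
    ultimately have a1: "[S_sum r (q * N1) = - (r2 - 1)] (mod P ^ m)"
      using e1 by simp
    have a2: "[r ^ (q * N1) * S_sum r N2 = r2 - 1] (mod P ^ m)"
      using c2 r2e unfolding N1_def N2_def P_def r_def by (simp add: power_mult mult.commute)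
    have "S_sum r (q * N1 + N2) = S_sum r (q * N1) + r ^ (q * N1) * S_sum r N2" by (rule S_add)
    moreover have "[S_sum r (q * N1) + r ^ (q * N1) * S_sum r N2 = - (r2 - 1) + (r2 - 1)] (mod P ^ m)"
      using a1 a2 by (rule cong_add)
    ultimately have "[S_sum r (q * N1 + N2) = 0] (mod P ^ m)" by simp
    then have "p ^ m dvd q * N1 + N2" using S_val[OF p rp] unfolding P_def by (simp add: cong_0_iff)
    moreover have "q * N1 + N2 = (\<delta>1 + \<delta>2) * p ^ (m - o2)"
    proof -
      have "q * N1 = \<delta>1 * p ^ ((o1 - o2) + (m - o1))" unfolding q_def N1_def by (simp add: power_add)
      also have "(o1 - o2) + (m - o1) = m - o2" using o21 o1m by simp
      finally show ?thesis unfolding N2_def by (simp add: algebra_simps)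
    qed
    moreover have "p ^ m = p ^ o2 * p ^ (m - o2)" using o21 o1m by (simp flip: power_add)
    ultimately have "p ^ o2 dvd \<delta>1 + \<delta>2" using p1 by simp
    then show ?thesis using False by (simp add: cong_0_iff)
  qed
qed




lemma fermat_iter:
  fixes p e k :: nat
  assumes p: "Factorial_Ring.prime p" and h: "[e ^ (p ^ k) = 1] (mod p)"
  shows "[e = 1] (mod p)"
proof -
  have p1: "p > 1" using p prime_gt_1_nat by simp
  have nd: "\<not> p dvd e"
  proof
    assume "p dvd e"
    moreover have "e dvd e ^ (p ^ k)" using p1 by (simp add: dvd_power)
    ultimately have "p dvd e ^ (p ^ k)" by (rule dvd_trans)
    then have "[e ^ (p ^ k) = 0] (mod p)" by (simp add: cong_0_iff)
    then have "[0 = 1] (mod p)" using h by (metis cong_sym cong_trans)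
    then show False using p1 by (auto simp: cong_0_1_nat')
  qed
  have f: "[e ^ (p - 1) = 1] (mod p)" using fermat_theorem[OF p nd] .
  have ep: "[e ^ p = e] (mod p)"
  proof -
    have "[e ^ (p - 1) * e = 1 * e] (mod p)" using f by (rule cong_scalar_right)
    moreover have "e ^ (p - 1) * e = e ^ p" using p1 by (simp flip: power_Suc2)
    ultimately show ?thesis by simp
  qed
  have "[e ^ (p ^ i) = e] (mod p)" for i
  proof (induction i)
    case 0 then show ?case by simp
  next
    case (Suc i)
    have "e ^ (p ^ Suc i) = (e ^ (p ^ i)) ^ p" by (simp add: power_mult[symmetric] mult.commute)
    moreover have "[(e ^ (p ^ i)) ^ p = e ^ p] (mod p)" using Suc by (rule cong_pow)
    ultimately show ?case using ep by (metis cong_trans)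
  qed
  then show ?thesis using h by (metis cong_sym cong_trans)
qed

lemma L1:
  fixes p m a z :: nat
  assumes p: "Factorial_Ring.prime p" "odd p" and z1: "[z = 1] (mod p)"
    and zp: "[z ^ (p ^ a) = 1] (mod p ^ m)" and am: "a \<le> m"
  shows "[z = 1] (mod p ^ (m - a))"
proof -
  define P where "P = int p"
  have pP: "P > 1" using p prime_gt_1_nat unfolding P_def by simp
  have primeP: "Factorial_Ring.prime P" using p unfolding P_def by simp
  have z1i: "[int z = 1] (mod int p)" using z1 cong_int_iff[of z 1 p] by simp
  have d1: "P ^ a dvd S_sum (int z) (p ^ a)" using S_val[OF p z1i] P_def by simp
  have d2: "\<not> P ^ Suc a dvd S_sum (int z) (p ^ a)"
  proof
    assume "P ^ Suc a dvd S_sum (int z) (p ^ a)"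
    then have "p ^ Suc a dvd p ^ a" using S_val[OF p z1i, of "Suc a" "p ^ a"] unfolding P_def by blast
    then have "Suc a \<le> a" using p prime_gt_1_nat power_dvd_imp_le by blast
    then show False by simp
  qed
  obtain u where u: "S_sum (int z) (p ^ a) = P ^ a * u" using d1 by blast
  have nu: "\<not> P dvd u"
  proof
    assume "P dvd u"
    then have "P ^ Suc a dvd P ^ a * u" by (simp add: mult_dvd_mono)
    then show False using d2 u by simp
  qed
  have cop: "coprime (P ^ (m - a)) u" using nu primeP by (simp add: prime_imp_coprime)
  have "[int z ^ (p ^ a) = 1] (mod P ^ m)" using zp cong_int_iff[of "z ^ (p ^ a)" 1 "p ^ m"] P_def by simp
  then have "P ^ m dvd (int z - 1) * S_sum (int z) (p ^ a)" by (simp add: S_geom cong_iff_dvd_diff)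
  moreover have "P ^ m = P ^ (m - a) * P ^ a" using am by (simp flip: power_add)
  ultimately have "P ^ (m - a) * P ^ a dvd ((int z - 1) * u) * P ^ a" using u by (simp add: algebra_simps)
  then have "P ^ (m - a) dvd (int z - 1) * u" using pP by simp
  then have "P ^ (m - a) dvd int z - 1" using cop by (simp add: coprime_dvd_mult_left_iff)
  then have "[int z = int 1] (mod int (p ^ (m - a)))" unfolding P_def by (simp add: cong_iff_dvd_diff)
  then show ?thesis by (simp only: cong_int_iff)
qed

lemma NB:
  fixes p m o1 o2 x y :: nat
  assumes p: "Factorial_Ring.prime p" "odd p" and o: "o1 < o2" "o2 < m"
    and x1: "[x = 1] (mod p)" and y1: "[y = 1] (mod p)"
    and xo: "[x ^ (p ^ o1) = 1] (mod p ^ m)"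
    and yo: "\<And>n. [y ^ n = 1] (mod p ^ m) \<longleftrightarrow> p ^ o2 dvd n"
  shows "\<exists>k. [x * y ^ k = 1] (mod p ^ m)"
proof -
  have p1: "p > 1" using p prime_gt_1_nat by simp
  define d where "d = p ^ (m - o1)"
  define M where "M = p ^ m"
  define K where "K = p ^ o1"
  have MdK: "M = d * K" unfolding M_def d_def K_def using o by (simp flip: power_add)
  have d1: "d > 1" unfolding d_def using o p1 one_less_power[of p "m - o1"] by simp
  have K0: "K > 0" unfolding K_def using p1 by simp
  have M0: "M > 0" unfolding M_def using p1 by simp
  define w where "w = y ^ (p ^ (o2 - o1))"
  have wo: "[w ^ n = 1] (mod M) \<longleftrightarrow> K dvd n" for n
  proof -
    have "w ^ n = y ^ (p ^ (o2 - o1) * n)" unfolding w_def by (simp add: power_mult)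
    moreover have "p ^ o2 = p ^ (o2 - o1) * K" unfolding K_def using o by (simp flip: power_add)
    ultimately show ?thesis using yo p1 unfolding M_def by simp
  qed
  have w1: "[w = 1] (mod p)" unfolding w_def using cong_pow[OF y1, of "p ^ (o2 - o1)"] by simp
  have copw: "coprime w M"
  proof -
    have "coprime 1 p" by simp
    then have "coprime w p" using cong_imp_coprime[OF cong_sym[OF w1]] by simp
    then show ?thesis unfolding M_def by simp
  qed
  define T where "T = {z. z < M \<and> [z = 1] (mod d)}"
  have finT: "finite T" unfolding T_def by simp
  have Tsub: "T \<subseteq> (\<lambda>t. 1 + d * t) ` {..<K}"
  proof
    fix z assume "z \<in> T"
    then have z: "z < M" "[z = 1] (mod d)" unfolding T_def by auto
    have "z mod d = 1" using z(2) d1 unfolding cong_def by simp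
    moreover have "z = d * (z div d) + z mod d" by simp
    ultimately have "z = 1 + d * (z div d)" by linarith
    moreover have "z div d < K" using z(1) MdK by (simp add: less_mult_imp_div_less mult.commute)
    ultimately show "z \<in> (\<lambda>t. 1 + d * t) ` {..<K}" by blast
  qed
  have cardT: "card T \<le> K"
    using card_mono[OF _ Tsub] card_image_le[of "{..<K}" "\<lambda>t. 1 + d * t"] by simp
  define f where "f k = w ^ k mod M" for k
  have inj_aux: "i = j" if "i \<le> j" "j < K" "f i = f j" for i j
  proof -
    have "[w ^ i * w ^ (j - i) = w ^ i * 1] (mod M)"
      using that unfolding f_def cong_def by (simp flip: power_add)
    moreover have "coprime (w ^ i) M" using copw by simp
    ultimately have "[w ^ (j - i) = 1] (mod M)" using cong_mult_lcancel_nat by blast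
    then have "K dvd j - i" using wo by simp
    moreover have "j - i < K" using that by simp
    ultimately have "\<not> 0 < j - i" using dvd_imp_le by (meson not_le)
    then show ?thesis using that by simp
  qed
  have inj: "inj_on f {..<K}"
  proof (rule inj_onI)
    fix i j assume "i \<in> {..<K}" "j \<in> {..<K}" "f i = f j"
    then have ij: "i < K" "j < K" "f i = f j" by auto
    show "i = j"
    proof (cases "i \<le> j")
      case True then show ?thesis using inj_aux ij by blast
    next
      case False then have "j \<le> i" by simp
      then show ?thesis using inj_aux[of j i] ij by simp
    qed
  qed
  have fsub: "f ` {..<K} \<subseteq> T"
  proof
    fix z assume "z \<in> f ` {..<K}"
    then obtain k where z: "z = w ^ k mod M" unfolding f_def by blast
    have a1: "[w ^ k = 1] (mod p)" using cong_pow[OF w1, of k] by simp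
    have "[(w ^ k) ^ K = 1] (mod M)" using wo[of "k * K"] by (simp add: power_mult)
    then have h1: "[w ^ k = 1] (mod d)" using L1[OF p a1, of o1 m] o unfolding d_def M_def K_def by simp
    have "[w ^ k mod M = w ^ k] (mod M)" by simp
    then have h2: "[w ^ k mod M = w ^ k] (mod d)" by (rule cong_dvd_modulus_nat) (simp add: MdK)
    have "[z = 1] (mod d)" unfolding z by (rule cong_trans[OF h2 h1])
    moreover have "z < M" using z M0 by simp
    ultimately show "z \<in> T" unfolding T_def by simp
  qed
  have "card (f ` {..<K}) = K" using card_image[OF inj] by simp
  then have feq: "f ` {..<K} = T" using card_seteq[OF finT fsub] cardT by simp
  define x' where "x' = x ^ (K - 1)"
  have xx': "x * x' = x ^ K" unfolding x'_def using K0 by (simp flip: power_Suc)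
  have x'1: "[x' = 1] (mod p)" unfolding x'_def using cong_pow[OF x1, of "K - 1"] by simp
  have "[x' ^ K = 1] (mod M)"
  proof -
    have "x' ^ K = (x ^ K) ^ (K - 1)" unfolding x'_def by (simp flip: power_mult add: mult.commute)
    moreover have "[(x ^ K) ^ (K - 1) = 1 ^ (K - 1)] (mod M)" using cong_pow[OF xo] unfolding K_def M_def by blast
    ultimately show ?thesis by simp
  qed
  then have h1: "[x' = 1] (mod d)" using L1[OF p x'1, of o1 m] o unfolding d_def M_def K_def by simp
  have "[x' mod M = x'] (mod M)" by simp
  then have h2: "[x' mod M = x'] (mod d)" by (rule cong_dvd_modulus_nat) (simp add: MdK)
  have "[x' mod M = 1] (mod d)" by (rule cong_trans[OF h2 h1])
  moreover have "x' mod M < M" using M0 by simp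
  ultimately have "x' mod M \<in> T" unfolding T_def by simp
  then have "x' mod M \<in> f ` {..<K}" using feq by simp
  then obtain k where k: "x' mod M = w ^ k mod M" unfolding f_def by blast
  have "(x * w ^ k) mod M = (x * (w ^ k mod M)) mod M" by (simp add: mod_mult_right_eq)
  also have "\<dots> = (x * (x' mod M)) mod M" using k by simp
  also have "\<dots> = (x * x') mod M" by (simp add: mod_mult_right_eq)
  finally have "[x * w ^ k = x * x'] (mod M)" unfolding cong_def .
  moreover have "[x * x' = 1] (mod M)" using xx' xo unfolding M_def K_def by simp
  ultimately have "[x * w ^ k = 1] (mod M)" by (rule cong_trans)
  then have "[x * y ^ (p ^ (o2 - o1) * k) = 1] (mod p ^ m)" unfolding w_def M_def by (simp add: power_mult)
  then show ?thesis by blast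
qed

lemma (in comm_group) basis_shift:
  assumes x: "x \<in> carrier G" and y: "y \<in> carrier G"
    and gen: "generate G {x, y} = carrier G"
    and int: "generate G {x} \<inter> generate G {y} = {\<one>}"
    and dv: "ord y dvd ord x"
  shows "generate G {x \<otimes> y [^] (k::nat), y} = carrier G \<and>
         generate G {x \<otimes> y [^] k} \<inter> generate G {y} = {\<one>} \<and>
         ord (x \<otimes> y [^] k) = ord x"
proof -
  define x' where "x' = x \<otimes> y [^] k"
  have x'c: "x' \<in> carrier G" unfolding x'_def using x y by simp
  have sy: "subgroup (generate G {y}) G" using y by (intro generate_is_subgroup) simp
  have sx: "subgroup (generate G {x}) G" using x by (intro generate_is_subgroup) simp
  have yy: "y \<in> generate G {y}" by (rule generate.incl) simp
  have xx: "x \<in> generate G {x}" by (rule generate.incl) simp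
  have e: "x' [^] (a::int) = x [^] a \<otimes> y [^] (int k * a)" for a
  proof -
    have "x' [^] a = x [^] a \<otimes> (y [^] k) [^] a" unfolding x'_def using x y by (simp add: int_pow_distrib)
    also have "(y [^] k) [^] a = y [^] (int k * a)"
      using int_pow_pow[OF y, of "int k" a] y by (simp add: int_pow_int)
    finally show ?thesis .
  qed
  have key: "x [^] a = \<one>" if h: "x' [^] (a::int) \<in> generate G {y}" for a
  proof -
    have "x [^] a = x' [^] a \<otimes> inv (y [^] (int k * a))"
      using e[of a] x y by (simp add: m_assoc)
    moreover have "inv (y [^] (int k * a)) \<in> generate G {y}"
      using subgroup.m_inv_closed[OF sy subgroup_int_pow_closed[OF sy yy]] .
    ultimately have "x [^] a \<in> generate G {y}" using subgroup.m_closed[OF sy h] by simp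
    moreover have "x [^] a \<in> generate G {x}" using subgroup_int_pow_closed[OF sx xx] .
    ultimately have "x [^] a \<in> generate G {x} \<inter> generate G {y}" by simp
    then show ?thesis using int by simp
  qed
  have A: "generate G {x', y} = carrier G"
  proof -
    let ?H = "generate G {x', y}"
    have sH: "subgroup ?H G" using x'c y by (intro generate_is_subgroup) simp
    have x'H: "x' \<in> ?H" by (rule generate.incl) simp
    have yH: "y \<in> ?H" by (rule generate.incl) simp
    have "x = x' \<otimes> inv (y [^] k)" unfolding x'_def using x y by (simp add: m_assoc)
    moreover have "inv (y [^] k) \<in> ?H"
      using subgroup.m_inv_closed[OF sH subgroup_int_pow_closed[OF sH yH, of "int k"]] y by (simp add: int_pow_int)
    ultimately have "x \<in> ?H" using subgroup.m_closed[OF sH x'H] by simp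
    then have "generate G {x, y} \<subseteq> ?H" using yH sH by (intro generate_subgroup_incl) auto
    moreover have "?H \<subseteq> carrier G" using x'c y by (intro generate_incl) simp
    ultimately show ?thesis using gen by simp
  qed
  have B: "generate G {x'} \<inter> generate G {y} = {\<one>}"
  proof
    show "{\<one>} \<subseteq> generate G {x'} \<inter> generate G {y}" using generate.one by blast
  next
    show "generate G {x'} \<inter> generate G {y} \<subseteq> {\<one>}"
    proof
      fix z assume z: "z \<in> generate G {x'} \<inter> generate G {y}"
      have "z \<in> {x' [^] (k::int) | k. k \<in> UNIV}" using z generate_pow[OF x'c] by simp
      then obtain a :: int where a: "z = x' [^] a" by blast
      have "x' [^] a \<in> generate G {y}" using z a by simp
      then have "x [^] a = \<one>" by (rule key)
      then have "int (ord x) dvd a" using int_pow_eq_id[OF x] by simp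
      moreover have "int (ord y) dvd int (ord x)" using dv by simp
      ultimately have "int (ord y) dvd a" by (rule dvd_trans[rotated])
      then have "int (ord y) dvd int k * a" by (rule dvd_mult)
      then have "y [^] (int k * a) = \<one>" using int_pow_eq_id[OF y] by simp
      then show "z \<in> {\<one>}" using a e \<open>x [^] a = \<one>\<close> by simp
    qed
  qed
  have C: "ord x' = ord x"
    unfolding ord_unique[OF x'c]
  proof
    fix n :: nat
    show "x' [^] n = \<one> \<longleftrightarrow> ord x dvd n"
    proof
      assume h: "x' [^] n = \<one>"
      have "x' [^] (int n) \<in> generate G {y}" using h generate.one by (simp add: int_pow_int)
      then have "x [^] (int n) = \<one>" by (rule key)
      then show "ord x dvd n" using pow_eq_id[OF x] by (simp add: int_pow_int)
    next
      assume h: "ord x dvd n"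
      then have "ord y dvd n" using dv by (rule dvd_trans[rotated])
      then have "ord y dvd k * n" by (rule dvd_mult)
      then have "y [^] (k * n) = \<one>" using pow_eq_id[OF y] by simp
      moreover have "x [^] n = \<one>" using h pow_eq_id[OF x] by simp
      moreover have "x' [^] n = x [^] n \<otimes> y [^] (k * n)"
        unfolding x'_def using x y by (simp add: nat_pow_distrib nat_pow_pow)
      ultimately show "x' [^] n = \<one>" by simp
    qed
  qed
  show ?thesis using A B C unfolding x'_def by simp
qed

locale cycG = group G for G (structure) +
  fixes c :: 'a and p m :: nat
  assumes fin: "finite (carrier G)"
    and pprime: "Factorial_Ring.prime p"
    and pgrp: "\<exists>k. order G = p ^ k"
    and c_in: "c \<in> comm_sub G" and gen: "generate G {c} = comm_sub G"
    and cardD: "card (comm_sub G) = p ^ m"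
begin

definition acts :: "'a \<Rightarrow> nat \<Rightarrow> bool" where
  "acts g e \<longleftrightarrow> g \<otimes> c \<otimes> inv g = c [^] e"

lemma p1: "p > 1" using pprime prime_gt_1_nat by simp

lemma D_normal: "comm_sub G \<lhd> G" using derived_is_normal[OF normal_self] .

lemma D_sub: "comm_sub G \<subseteq> carrier G"
  using normal_imp_subgroup[OF D_normal] subgroup.subset by blast

lemma c_carr: "c \<in> carrier G" using c_in D_sub by blast

lemma ord_c: "ord c = p ^ m" using generate_pow_card[OF c_carr] gen cardD by simp

lemma D_pow: "comm_sub G = {c [^] k | k::nat. k \<in> UNIV}"
  using generate_pow_nat[OF c_carr] ord_c p1 gen by simp

lemma acts_ex: "g \<in> carrier G \<Longrightarrow> \<exists>e. acts g e"
  using normal.inv_op_closed2[OF D_normal _ c_in] D_pow unfolding acts_def by blast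

lemma pow_cong: "c [^] (a::nat) = c [^] (b::nat) \<longleftrightarrow> [a = b] (mod p ^ m)"
proof -
  have "c [^] (a::nat) = c [^] (b::nat) \<longleftrightarrow> c [^] (int a) = c [^] (int b)" by (simp add: int_pow_int)
  also have "\<dots> \<longleftrightarrow> int (p ^ m) dvd (int b - int a)" using int_pow_eq[OF c_carr] ord_c by simp
  also have "\<dots> \<longleftrightarrow> [int a = int b] (mod int (p ^ m))" by (simp add: cong_iff_dvd_diff dvd_diff_commute)
  also have "\<dots> \<longleftrightarrow> [a = b] (mod p ^ m)" by (rule cong_int_iff)
  finally show ?thesis .
qed

lemma linv_assoc: "g \<in> carrier G \<Longrightarrow> x \<in> carrier G \<Longrightarrow> inv g \<otimes> (g \<otimes> x) = x"
  by (simp add: m_assoc[symmetric])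

lemma conj_mult: "g \<in> carrier G \<Longrightarrow> a \<in> carrier G \<Longrightarrow> b \<in> carrier G \<Longrightarrow>
   g \<otimes> (a \<otimes> b) \<otimes> inv g = (g \<otimes> a \<otimes> inv g) \<otimes> (g \<otimes> b \<otimes> inv g)"
  by (simp add: m_assoc linv_assoc)

lemma acts_conj_pow:
  assumes "acts g e" "g \<in> carrier G"
  shows "g \<otimes> c [^] (n::nat) \<otimes> inv g = c [^] (e * n)"
proof (induction n)
  case 0 then show ?case using assms by simp
next
  case (Suc n)
  have "g \<otimes> c [^] Suc n \<otimes> inv g = g \<otimes> (c [^] n \<otimes> c) \<otimes> inv g" by simp
  also have "\<dots> = (g \<otimes> c [^] n \<otimes> inv g) \<otimes> (g \<otimes> c \<otimes> inv g)"
    using assms c_carr by (intro conj_mult) auto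
  also have "\<dots> = c [^] (e * n) \<otimes> c [^] e" using Suc assms unfolding acts_def by simp
  also have "\<dots> = c [^] (e * Suc n)" using c_carr by (simp add: nat_pow_mult algebra_simps)
  finally show ?case .
qed

lemma acts_mult:
  assumes "acts a e1" "acts b e2" "a \<in> carrier G" "b \<in> carrier G"
  shows "acts (a \<otimes> b) (e1 * e2)"
proof -
  have "a \<otimes> b \<otimes> c \<otimes> inv (a \<otimes> b) = a \<otimes> (b \<otimes> c \<otimes> inv b) \<otimes> inv a"
    using assms c_carr by (simp add: inv_mult_group m_assoc)
  also have "\<dots> = a \<otimes> c [^] e2 \<otimes> inv a" using assms unfolding acts_def by simp
  also have "\<dots> = c [^] (e1 * e2)" by (rule acts_conj_pow[OF assms(1,3)])
  finally show ?thesis unfolding acts_def .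
qed

lemma acts_one: "acts \<one> 1" unfolding acts_def using c_carr by simp

lemma acts_npow:
  assumes "acts g e" "g \<in> carrier G"
  shows "acts (g [^] (n::nat)) (e ^ n)"
proof (induction n)
  case 0 then show ?case using acts_one by simp
next
  case (Suc n)
  have "acts (g [^] n \<otimes> g) (e ^ n * e)" using acts_mult[OF Suc assms(1) _ assms(2)] assms by simp
  then show ?case by (simp add: mult.commute)
qed

lemma acts_cong: "acts g e \<Longrightarrow> acts g e' \<Longrightarrow> [e = e'] (mod p ^ m)"
proof -
  assume "acts g e" "acts g e'"
  then have "c [^] e = c [^] e'" unfolding acts_def by simp
  then show ?thesis using pow_cong by simp
qed

lemma acts_cong2: "acts g e \<Longrightarrow> [e = e'] (mod p ^ m) \<Longrightarrow> acts g e'"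
  unfolding acts_def using pow_cong by simp

lemma comm_of_conj: "g \<in> carrier G \<Longrightarrow> h \<in> carrier G \<Longrightarrow> g \<otimes> h \<otimes> inv g = h \<Longrightarrow> g \<otimes> h = h \<otimes> g"
proof -
  assume a: "g \<in> carrier G" "h \<in> carrier G" "g \<otimes> h \<otimes> inv g = h"
  have "h \<otimes> g = (g \<otimes> h \<otimes> inv g) \<otimes> g" by (simp only: a(3))
  also have "\<dots> = g \<otimes> h" using a(1,2) by (simp add: m_assoc)
  finally show ?thesis by (rule sym)
qed

lemma C_iff:
  assumes g: "g \<in> carrier G"
  shows "g \<in> centralizer G (comm_sub G) \<longleftrightarrow> acts g 1"
proof
  assume "g \<in> centralizer G (comm_sub G)"
  then have comm: "g \<otimes> c = c \<otimes> g" using c_in unfolding centralizer_def by blast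
  have "g \<otimes> c \<otimes> inv g = c \<otimes> g \<otimes> inv g" by (simp only: comm)
  also have "\<dots> = c" using g c_carr by (simp add: m_assoc)
  finally have "g \<otimes> c \<otimes> inv g = c" .
  then show "acts g 1" unfolding acts_def using c_carr by simp
next
  assume a: "acts g 1"
  have "g \<otimes> h = h \<otimes> g" if "h \<in> comm_sub G" for h
  proof -
    have "h \<in> {c [^] k | k::nat. k \<in> UNIV}" using that D_pow by simp
    then obtain k :: nat where k: "h = c [^] k" by blast
    have "g \<otimes> h \<otimes> inv g = h" using acts_conj_pow[OF a g, of k] k by simp
    moreover have "h \<in> carrier G" using k c_carr by simp
    ultimately show ?thesis using comm_of_conj g by blast
  qed
  then show "g \<in> centralizer G (comm_sub G)" unfolding centralizer_def using g by blast
qed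

lemma C_sub: "centralizer G (comm_sub G) \<subseteq> carrier G"
  unfolding centralizer_def by blast

lemma inv_acts: "g \<in> carrier G \<Longrightarrow> acts g e \<Longrightarrow> acts (inv g) e' \<Longrightarrow> [e * e' = 1] (mod p ^ m)"
proof -
  assume g: "g \<in> carrier G" and a: "acts g e" and b: "acts (inv g) e'"
  have "acts (g \<otimes> inv g) (e * e')" using acts_mult[OF a b g] g by simp
  then have "acts \<one> (e * e')" using g by simp
  then show ?thesis using acts_cong[OF _ acts_one] by blast
qed

lemma C_subgroup: "subgroup (centralizer G (comm_sub G)) G"
proof (rule subgroupI)
  show "centralizer G (comm_sub G) \<subseteq> carrier G" by (rule C_sub)
  show "centralizer G (comm_sub G) \<noteq> {}" using C_iff[of \<one>] acts_one by auto
next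
  fix a assume a: "a \<in> centralizer G (comm_sub G)"
  then have ac: "a \<in> carrier G" "acts a 1" using C_sub C_iff by auto
  obtain e' where e': "acts (inv a) e'" using acts_ex[OF inv_closed[OF ac(1)]] by blast
  have "[1 * e' = 1] (mod p ^ m)" using inv_acts[OF ac e'] .
  then have "acts (inv a) 1" using acts_cong2[OF e'] by simp
  then show "inv a \<in> centralizer G (comm_sub G)" using C_iff ac by simp
next
  fix a b assume "a \<in> centralizer G (comm_sub G)" "b \<in> centralizer G (comm_sub G)"
  then have "a \<in> carrier G" "acts a 1" "b \<in> carrier G" "acts b 1" using C_sub C_iff by auto
  then show "a \<otimes> b \<in> centralizer G (comm_sub G)" using acts_mult C_iff by fastforce
qed

lemma C_normal: "centralizer G (comm_sub G) \<lhd> G"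
  unfolding normal_inv_iff
proof (intro conjI ballI)
  show "subgroup (centralizer G (comm_sub G)) G" by (rule C_subgroup)
next
  fix x h assume x: "x \<in> carrier G" and h: "h \<in> centralizer G (comm_sub G)"
  then have hc: "h \<in> carrier G" "acts h 1" using C_sub C_iff by auto
  obtain e where e: "acts x e" using acts_ex x by auto
  obtain e' where e': "acts (inv x) e'" using acts_ex[OF inv_closed[OF x]] by blast
  have "acts (x \<otimes> h \<otimes> inv x) (e * 1 * e')"
    using acts_mult[OF acts_mult[OF e hc(2) x hc(1)] e'] x hc by simp
  moreover have "[e * 1 * e' = 1] (mod p ^ m)" using inv_acts[OF x e e'] by simp
  ultimately have "acts (x \<otimes> h \<otimes> inv x) 1" using acts_cong2 by blast
  then show "x \<otimes> h \<otimes> inv x \<in> centralizer G (comm_sub G)" using C_iff x hc by simp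
qed

definition ordC :: "'a \<Rightarrow> nat" where
  "ordC g = group.ord (G Mod (centralizer G (comm_sub G))) (centralizer G (comm_sub G) #> g)"

lemma ordC_dvd:
  assumes g: "g \<in> carrier G" and e: "acts g e"
  shows "ordC g dvd n \<longleftrightarrow> [e ^ n = 1] (mod p ^ m)"
proof -
  let ?C = "centralizer G (comm_sub G)"
  interpret Q: group "G Mod ?C" using normal.factorgroup_is_group[OF C_normal] .
  have gc: "?C #> g \<in> carrier (G Mod ?C)" unfolding carrier_FactGroup using g by blast
  have gn: "g [^] n \<in> carrier G" using g by simp
  have pw: "(?C #> g) [^]\<^bsub>G Mod ?C\<^esub> n = ?C #> (g [^] n)"
    using hom_nat_pow[OF normal.r_coset_hom_Mod[OF C_normal] g is_group Q.is_group] by simp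
  have s1: "(?C #> g) [^]\<^bsub>G Mod ?C\<^esub> n = \<one>\<^bsub>G Mod ?C\<^esub> \<longleftrightarrow> ordC g dvd n"
    unfolding ordC_def by (rule Q.pow_eq_id[OF gc])
  have s2: "?C #> (g [^] n) = ?C \<longleftrightarrow> g [^] n \<in> ?C"
  proof
    assume h: "?C #> (g [^] n) = ?C"
    have "g [^] n \<in> ?C #> (g [^] n)" by (rule rcos_self[OF gn C_subgroup])
    then show "g [^] n \<in> ?C" using h by simp
  next
    assume "g [^] n \<in> ?C"
    then show "?C #> (g [^] n) = ?C" by (rule subgroup.rcos_const[OF C_subgroup is_group])
  qed
  have s3: "g [^] n \<in> ?C \<longleftrightarrow> acts (g [^] n) 1" by (rule C_iff[OF gn])
  have an: "acts (g [^] n) (e ^ n)" by (rule acts_npow[OF e g])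
  have s4: "acts (g [^] n) 1 \<longleftrightarrow> [e ^ n = 1] (mod p ^ m)"
  proof
    assume "acts (g [^] n) 1"
    then show "[e ^ n = 1] (mod p ^ m)" by (rule acts_cong[OF an])
  next
    assume "[e ^ n = 1] (mod p ^ m)"
    then show "acts (g [^] n) 1" by (rule acts_cong2[OF an])
  qed
  have "\<one>\<^bsub>G Mod ?C\<^esub> = ?C" by simp
  then show ?thesis using s1 s2 s3 s4 pw by simp
qed

lemma o_exp_eq:
  assumes "ordC g = p ^ j" shows "o_exp G p g = j"
proof -
  have "(THE k. p ^ k = p ^ j) = j"
    using p1 by (intro the_equality) (auto simp: power_inject_exp)
  then show ?thesis using assms unfolding o_exp_def ordC_def by simp
qed

lemma e_cong1:
  assumes g: "g \<in> carrier G" and e: "acts g e" and m: "m \<ge> 1"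
  shows "[e = 1] (mod p)"
proof -
  obtain k where k: "order G = p ^ k" using pgrp by blast
  have "g [^] order G = \<one>" using pow_order_eq_1[OF g] .
  then have "acts \<one> (e ^ order G)" using acts_npow[OF e g, of "order G"] by simp
  then have "[e ^ order G = 1] (mod p ^ m)" using acts_cong[OF _ acts_one] by blast
  then have "[e ^ (p ^ k) = 1] (mod p ^ m)" using k by simp
  moreover have "p dvd p ^ m" using m by (simp add: dvd_power)
  ultimately have "[e ^ (p ^ k) = 1] (mod p)" by (rule cong_dvd_modulus_nat)
  then show ?thesis using fermat_iter pprime by blast
qed

lemma ordC_bound:
  assumes g: "g \<in> carrier G" and podd: "odd p"
  shows "\<exists>j \<le> m - 1. ordC g = p ^ j"
proof -
  obtain e where e: "acts g e" using acts_ex g by blast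
  have "[e ^ (p ^ (m - 1)) = 1] (mod p ^ m)"
  proof (cases "m = 0")
    case True then show ?thesis by simp
  next
    case False
    then have e1: "[e = 1] (mod p)" using e_cong1[OF g e] by simp
    then have e1i: "[int e = 1] (mod int p)" using cong_int_iff[of e 1 p] by simp
    have "int p ^ (m - 1) dvd S_sum (int e) (p ^ (m - 1))" using S_val[OF pprime podd e1i] by simp
    moreover have "int p dvd int e - 1" using e1i by (simp add: cong_iff_dvd_diff)
    ultimately have "int p * int p ^ (m - 1) dvd (int e - 1) * S_sum (int e) (p ^ (m - 1))"
      by (simp add: mult_dvd_mono)
    moreover have "int p * int p ^ (m - 1) = int p ^ m" using False
      by (simp flip: power_Suc)
    ultimately have "int p ^ m dvd int e ^ (p ^ (m - 1)) - 1" 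
      by (simp add: S_geom)
    then have "[int e ^ (p ^ (m - 1)) = 1] (mod int p ^ m)" by (simp add: cong_iff_dvd_diff)
    then have "[int (e ^ (p ^ (m - 1))) = int 1] (mod int (p ^ m))" by simp
    then show ?thesis by (simp only: cong_int_iff)
  qed
  then have "ordC g dvd p ^ (m - 1)" using ordC_dvd[OF g e] by simp
  then show ?thesis using divides_primepow_nat[OF pprime] by blast
qed


lemma basis_b1':
  assumes B: "is_basis G p n1 n2 b1 b2" and n21: "n2 \<le> n1"
  shows "is_basis G p n1 n2 (b1 \<otimes> b2 [^] (k::nat)) b2"
proof -
  let ?D = "comm_sub G"
  let ?Q = "G Mod ?D"
  interpret Q: comm_group ?Q by (rule derived_quot_is_comm_group)
  have hom: "(\<lambda>a. ?D #> a) \<in> hom G ?Q" by (rule normal.r_coset_hom_Mod[OF D_normal])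
  have b: "b1 \<in> carrier G" "b2 \<in> carrier G" using B unfolding is_basis_def Let_def by auto
  have xc: "?D #> b1 \<in> carrier ?Q" "?D #> b2 \<in> carrier ?Q" using b unfolding carrier_FactGroup by auto
  have gen: "generate ?Q {?D #> b1, ?D #> b2} = carrier ?Q"
    and int: "generate ?Q {?D #> b1} \<inter> generate ?Q {?D #> b2} = {\<one>\<^bsub>?Q\<^esub>}"
    and o1: "Q.ord (?D #> b1) = p ^ n1" and o2: "Q.ord (?D #> b2) = p ^ n2"
    using B unfolding is_basis_def Let_def by auto
  have dv: "Q.ord (?D #> b2) dvd Q.ord (?D #> b1)" using o1 o2 n21 by (simp add: le_imp_power_dvd)
  have eq: "?D #> (b1 \<otimes> b2 [^] k) = (?D #> b1) \<otimes>\<^bsub>?Q\<^esub> (?D #> b2) [^]\<^bsub>?Q\<^esub> k"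
    using hom_mult[OF hom b(1) nat_pow_closed[OF b(2)]] hom_nat_pow[OF hom b(2) is_group Q.is_group] by simp
  have R: "generate ?Q {(?D #> b1) \<otimes>\<^bsub>?Q\<^esub> (?D #> b2) [^]\<^bsub>?Q\<^esub> k, ?D #> b2} = carrier ?Q \<and>
         generate ?Q {(?D #> b1) \<otimes>\<^bsub>?Q\<^esub> (?D #> b2) [^]\<^bsub>?Q\<^esub> k} \<inter> generate ?Q {?D #> b2} = {\<one>\<^bsub>?Q\<^esub>} \<and>
         Q.ord ((?D #> b1) \<otimes>\<^bsub>?Q\<^esub> (?D #> b2) [^]\<^bsub>?Q\<^esub> k) = Q.ord (?D #> b1)"
    by (rule Q.basis_shift[OF xc gen int dv])
  show ?thesis unfolding is_basis_def Let_def using R eq o1 o2 b by (simp add: eq)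
qed

lemma orders:
  assumes podd: "odd p" and n21: "n2 \<le> n1"
   and ex: "\<exists>b1 b2. is_basis G p n1 n2 b1 b2 \<and> o_exp G p b1 = o1 \<and> o_exp G p b2 = o2"
   and mn: "\<forall>b1 b2. is_basis G p n1 n2 b1 b2 \<longrightarrow>
           o1 < o_exp G p b1 \<or> (o1 = o_exp G p b1 \<and> o2 \<le> o_exp G p b2)"
  shows "o1 \<le> m - 1 \<and> o2 \<le> m - 1 \<and> (o1 \<noteq> 0 \<longrightarrow> o2 \<le> o1)"
proof -
  obtain b1 b2 where B: "is_basis G p n1 n2 b1 b2" and ob: "o_exp G p b1 = o1" "o_exp G p b2 = o2"
    using ex by blast
  have b: "b1 \<in> carrier G" "b2 \<in> carrier G" using B unfolding is_basis_def Let_def by auto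
  obtain j1 where j1: "j1 \<le> m - 1" "ordC b1 = p ^ j1" using ordC_bound[OF b(1) podd] by blast
  obtain j2 where j2: "j2 \<le> m - 1" "ordC b2 = p ^ j2" using ordC_bound[OF b(2) podd] by blast
  have oj: "o1 = j1" "o2 = j2" using o_exp_eq[OF j1(2)] o_exp_eq[OF j2(2)] ob by auto
  have "o2 \<le> o1" if o10: "o1 \<noteq> 0"
  proof (rule ccontr)
    assume "\<not> o2 \<le> o1"
    then have lt: "o1 < o2" by simp
    have m1: "m \<ge> 1" "o2 < m" using lt j2 oj by auto
    obtain e1 where e1: "acts b1 e1" using acts_ex b by blast
    obtain e2 where e2: "acts b2 e2" using acts_ex b by blast
    have c1: "[e1 = 1] (mod p)" using e_cong1[OF b(1) e1 m1(1)] .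
    have c2: "[e2 = 1] (mod p)" using e_cong1[OF b(2) e2 m1(1)] .
    have xo: "[e1 ^ (p ^ o1) = 1] (mod p ^ m)" using ordC_dvd[OF b(1) e1, of "p ^ o1"] j1 oj by simp
    have yo: "[e2 ^ n = 1] (mod p ^ m) \<longleftrightarrow> p ^ o2 dvd n" for n
      using ordC_dvd[OF b(2) e2, of n] j2 oj by simp
    obtain k where k: "[e1 * e2 ^ k = 1] (mod p ^ m)"
      using NB[OF pprime podd lt m1(2) c1 c2 xo yo] by blast
    define b1' where "b1' = b1 \<otimes> b2 [^] k"
    have b1'c: "b1' \<in> carrier G" unfolding b1'_def using b by simp
    have "acts b1' (e1 * e2 ^ k)" unfolding b1'_def
      using acts_mult[OF e1 acts_npow[OF e2 b(2)] b(1)] b by simp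
    then have a1: "acts b1' 1" using acts_cong2 k by blast
    have "ordC b1' dvd 1" using ordC_dvd[OF b1'c a1, of 1] by simp
    then have "ordC b1' = p ^ 0" by simp
    then have "o_exp G p b1' = 0" by (rule o_exp_eq)
    moreover have "is_basis G p n1 n2 b1' b2" unfolding b1'_def by (rule basis_b1'[OF B n21])
    ultimately have "o1 < o_exp G p b1' \<or> (o1 = o_exp G p b1' \<and> o2 \<le> o_exp G p b2)" using mn by blast
    then show False using o10 \<open>o_exp G p b1' = 0\<close> by simp
  qed
  then show ?thesis using j1 j2 oj by auto
qed

end


theorem lemma3p6:
  fixes G :: "('a, 'b) monoid_scheme" and p m n1 n2 o1 o2 \<delta>1 \<delta>2 :: nat and r1 r2 :: int
  assumes "Factorial_Ring.prime p" and "odd p"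
    and "group G" and "finite (carrier G)" and "\<exists>k. order G = p ^ k"
    and "\<not> comm_group G"
    and "\<exists>a\<in>carrier G. \<exists>b\<in>carrier G. generate G {a, b} = carrier G"
    and "\<exists>c\<in>comm_sub G. generate G {c} = comm_sub G"
    and "card (comm_sub G) = p ^ m"
    and "G Mod (comm_sub G) \<cong> DirProd (integer_mod_group (p ^ n1)) (integer_mod_group (p ^ n2))"
    and "n1 \<ge> n2" and "n2 \<ge> 1"
    and "\<exists>b1 b2. is_basis G p n1 n2 b1 b2 \<and> o_exp G p b1 = o1 \<and> o_exp G p b2 = o2"
    and "\<forall>b1 b2. is_basis G p n1 n2 b1 b2 \<longrightarrow>
           o1 < o_exp G p b1 \<or> (o1 = o_exp G p b1 \<and> o2 \<le> o_exp G p b2)"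
    and "r1 = 1 + int p ^ (m - o1)"
    and "r2 = (if o2 > o1 then 1 + int p ^ (m - o2) else r1 ^ (p ^ (o1 - o2)))"
    and "1 \<le> \<delta>1" and "\<delta>1 \<le> p ^ o1" and "1 \<le> \<delta>2" and "\<delta>2 \<le> p ^ o2"
    and "[S_sum r2 (\<delta>1 * p ^ (m - o1)) = 1 - r1] (mod int p ^ m)"
    and "[S_sum r1 (\<delta>2 * p ^ (m - o2)) * r2 ^ (\<delta>1 * p ^ (m - o1)) = r2 - 1] (mod int p ^ m)"
  shows "(o1 = 0 \<longrightarrow> \<delta>1 = 1 \<and> \<delta>2 = 1) \<and> (o1 \<noteq> 0 \<longrightarrow> [\<delta>1 + \<delta>2 = 0] (mod p ^ o2))"
  proof -
  obtain c where c: "c \<in> comm_sub G" "generate G {c} = comm_sub G" using assms(8) by blast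
  have "cycG G c p m" unfolding cycG_def cycG_axioms_def using assms(1,3,4,5,9) c by auto
  then interpret cycG G c p m .
  have O: "o1 \<le> m - 1 \<and> o2 \<le> m - 1 \<and> (o1 \<noteq> 0 \<longrightarrow> o2 \<le> o1)"
    by (rule orders[OF assms(2) assms(11) assms(13) assms(14)])
  have hA1: "o1 \<le> m - 1" and hA2: "o2 \<le> m - 1" and hB: "o1 \<noteq> 0 \<Longrightarrow> o2 \<le> o1" using O by auto
  show ?thesis
    by (rule final_nt[OF assms(1) assms(2) hA1 hA2 hB assms(15) assms(16) assms(17) assms(18) assms(19) assms(20) assms(21) assms(22)])
qed

end
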